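(* Let $n\ge 2$ be an integer, let $\delta\in(0,1)$ with $\delta n$ an integer, and let $\mathcal{D}\subseteq[n]$ be any fixed set with $|\mathcal{D}|=\delta n$. Let $k,\ell\in\mathbb{N}$ with $k\le n$ and $\ell\le n-1$, let $\tilde\gamma\in(0,1)$ and $\beta\in(0,1)$ satisfy $$1-\delta-\tilde\gamma>0 \quad\text{and}\quad 1-\tfrac{\delta n}{n-1}-\beta>0,$$ and set $\tilde c=\tilde\gamma k$ and $t=\beta\ell$. Choose a committee $\mathcal{K}\subseteq[n]$ uniformly at random among all $k$-element subsets of $[n]$, and, given $\mathcal{K}$, for each $j\in\mathcal{K}$ choose $\mathcal{L}_j$ uniformly at random among all $\ell$-element subsets of $[n]\setminus\{j\}$. Consider the events $C_1:\ |\mathcal{K}\setminus\mathcal{D}|=k$; $\quad C_2:\ |\mathcal{K}\setminus\mathcal{D}|>\tilde c$; $\quad C_3:\ \forall j\in\mathcal{K}\cap\mathcal{D},\ |\mathcal{L}_j\setminus\mathcal{D}|\ge t$. If $\eta>0$ and $$k>\frac{\eta+1}{2\log_2(e)\,(1-\delta-\tilde\gamma)^2}\qquad\text{and}\qquad \ell>\frac{\log_2(k)+\eta+1}{2\log_2(e)\,\bigl(1-\frac{\delta n}{n-1}-\beta\bigr)^2},$$ then $$\Pr\bigl[C_1\lor(C_2\land C_3)\bigr]\ \ge\ 1-2^{-\eta}.$$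
   Context: Here $[n]=\{1,\dots,n\}$ is the set of users; $\mathcal{D}$ models the set of users that drop out, $\mathcal{K}$ the committee, and $\mathcal{L}_j$ the backup-neighbor set of committee member $j$. The hypergeometric distribution $\mathcal{HG}(N,C,m)$ is the law of the number of "special" elements in a uniformly random $m$-subset (drawn without replacement) of an $N$-element set containing $C$ special elements; its mean is $mC/N$. All logarithms written $\log_2$ are base 2, and $e$ is Euler's number. *)

theory Defs
  imports "HOL-Probability.Probability"
begin

text \<open>Outside K, L is the empty set (default of Pi_pmf).\<close>

definition committee_exp :: "nat \<Rightarrow> nat \<Rightarrow> nat \<Rightarrow> (nat set \<times> (nat \<Rightarrow> nat set)) pmf" where
  "committee_exp n k l =
     bind_pmf (pmf_of_set {K. K \<subseteq> {1..n} \<and> card K = k}) (\<lambda>K.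
       map_pmf (\<lambda>L. (K, L))
         (Pi_pmf K {} (\<lambda>j. pmf_of_set {L. L \<subseteq> {1..n} - {j} \<and> card L = l})))"

end

theory Submission
  imports Defs
begin


lemma choose_Suc_mult: "(n choose Suc k) * Suc k = (n choose k) * (n - k)"
  by (metis binomial_absorb_comp binomial_absorption mult.commute)

lemma choose_ratio:
  assumes "d \<le> N" "0 < N"
  shows "real (d choose s) \<le> real (N choose s) * (real d / real N)^s"
proof (induction s)
  case 0 then show ?case by simp
next
  case (Suc s)
  define q where "q = real d / real N"
  have q0: "0 \<le> q" by (simp add: q_def)
  have key: "real (d - s) \<le> real (N - s) * q"
  proof (cases "s \<le> d")
    case True
    then have "real (d - s) = real d - real s" "real (N - s) = real N - real s" using assms by auto
    moreover have "real s * q \<le> real s" using assms by (simp add: q_def field_simps mult_right_mono)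
    moreover have "real N * q = real d" using assms by (simp add: q_def)
    ultimately show ?thesis by (simp add: algebra_simps)
  next
    case False then show ?thesis using q0 by simp
  qed
  have "real (d choose Suc s) * real (Suc s) = real (d choose s) * real (d - s)"
    using choose_Suc_mult[of d s] by (metis of_nat_mult)
  also have "\<dots> \<le> real (N choose s) * q^s * real (d - s)"
    using Suc.IH by (intro mult_right_mono) (auto simp: q_def)
  also have "\<dots> \<le> real (N choose s) * q^s * (real (N - s) * q)"
    using key q0 by (intro mult_left_mono) auto
  also have "\<dots> = real (N choose s) * real (N - s) * q^Suc s" by (simp add: algebra_simps)
  also have "real (N choose s) * real (N - s) = real (N choose Suc s) * real (Suc s)"
    using choose_Suc_mult[of N s] by (metis of_nat_mult)
  finally have "real (d choose Suc s) * real (Suc s) \<le> real (N choose Suc s) * q ^ Suc s * real (Suc s)"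
    by (simp add: algebra_simps)
  then have "real (d choose Suc s) \<le> real (N choose Suc s) * q ^ Suc s"
    by (metis mult_le_cancel_right of_nat_0_less_iff zero_less_Suc)
  then show ?case unfolding q_def .
qed

lemma sum_Pow_card:
  assumes "finite A"
  shows "(\<Sum>T\<in>Pow A. f (card T)) = (\<Sum>s\<le>card A. of_nat (card A choose s) * f s)"
proof -
  have "(\<Sum>T\<in>Pow A. f (card T)) = (\<Sum>s\<le>card A. \<Sum>T\<in>{T\<in>Pow A. card T = s}. f (card T))"
    using assms by (intro sum.group[symmetric]) (auto intro: card_mono)
  also have "\<dots> = (\<Sum>s\<le>card A. of_nat (card A choose s) * f s)"
  proof (intro sum.cong refl)
    fix s
    have "(\<Sum>T\<in>{T\<in>Pow A. card T = s}. f (card T)) = (\<Sum>T\<in>{T\<in>Pow A. card T = s}. f s)"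
      by (intro sum.cong) auto
    also have "\<dots> = of_nat (card {T\<in>Pow A. card T = s}) * f s" by simp
    also have "card {T\<in>Pow A. card T = s} = card A choose s"
      using n_subsets[OF assms, of s] by (simp add: Pow_def)
    finally show "(\<Sum>T\<in>{T\<in>Pow A. card T = s}. f (card T)) = of_nat (card A choose s) * f s" .
  qed
  finally show ?thesis .
qed

lemma pow_as_sum_Pow:
  fixes a :: real
  assumes "finite A"
  shows "(1 + a) ^ card A = (\<Sum>T\<in>Pow A. a ^ card T)"
  using sum_Pow_card[OF assms, of "\<lambda>s. a ^ s"] binomial_ring[of a 1 "card A"]
  by (simp add: add.commute mult.commute)

lemma count_supersets:
  assumes "finite U" "T \<subseteq> U"
  shows "card {S. (S \<subseteq> U \<and> card S = m) \<and> T \<subseteq> S}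
          \<le> (if card T \<le> m then (card U - card T) choose (m - card T) else 0)"
proof (cases "card T \<le> m")
  case False
  have E: "{S. (S \<subseteq> U \<and> card S = m) \<and> T \<subseteq> S} = {}"
  proof (rule ccontr)
    assume "{S. (S \<subseteq> U \<and> card S = m) \<and> T \<subseteq> S} \<noteq> {}"
    then obtain S where "S \<subseteq> U" "card S = m" "T \<subseteq> S" by auto
    then have "card T \<le> m" using assms by (metis card_mono finite_subset)
    with False show False by simp
  qed
  show ?thesis unfolding E using False by simp
next
  case True
  have fT: "finite T" using assms finite_subset by blast
  have "{S. (S \<subseteq> U \<and> card S = m) \<and> T \<subseteq> S} \<subseteq> (\<lambda>R. R \<union> T) ` {R. R \<subseteq> U - T \<and> card R = m - card T}"
  proof
    fix S assume S: "S \<in> {S. (S \<subseteq> U \<and> card S = m) \<and> T \<subseteq> S}"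
    then have "S = (S - T) \<union> T" by auto
    moreover have "card (S - T) = m - card T" using S fT by (auto simp: card_Diff_subset)
    moreover have "S - T \<subseteq> U - T" using S by auto
    ultimately show "S \<in> (\<lambda>R. R \<union> T) ` {R. R \<subseteq> U - T \<and> card R = m - card T}" by blast
  qed
  then have "card {S. (S \<subseteq> U \<and> card S = m) \<and> T \<subseteq> S} \<le> card ((\<lambda>R. R \<union> T) ` {R. R \<subseteq> U - T \<and> card R = m - card T})"
    using assms by (intro card_mono) auto
  also have "\<dots> \<le> card {R. R \<subseteq> U - T \<and> card R = m - card T}"
    using assms by (intro card_image_le) auto
  also have "\<dots> = card (U - T) choose (m - card T)"
    using assms by (intro n_subsets) auto
  also have "card (U - T) = card U - card T" using assms fT by (simp add: card_Diff_subset)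
  finally show ?thesis using True by simp
qed

lemma gen_bound:
  fixes a :: real
  assumes U: "finite U" and D: "D' \<subseteq> U" and N: "0 < card U" and m: "m \<le> card U" and a: "a \<ge> 0"
  shows "(\<Sum>S\<in>{S. S\<subseteq>U \<and> card S = m}. (1+a)^card(S\<inter>D'))
          \<le> real (card U choose m) * (1 + a * (real (card D')/real(card U)))^m"
proof -
  define Ss where "Ss = {S. S\<subseteq>U \<and> card S = m}"
  define N where "N = card U"
  define d where "d = card D'"
  define p where "p = real d / real N"
  define g where "g = (\<lambda>s. if s \<le> m then real ((N - s) choose (m - s)) else 0)"
  have "Ss \<subseteq> Pow U" unfolding Ss_def by auto
  then have fSs: "finite Ss" using U by (meson finite_Pow_iff finite_subset)
  have fD: "finite D'" using U D finite_subset by blast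
  have "(\<Sum>S\<in>Ss. (1+a)^card(S\<inter>D')) = (\<Sum>S\<in>Ss. \<Sum>T\<in>{T. T \<in> Pow D' \<and> T \<subseteq> S}. a ^ card T)"
  proof (intro sum.cong refl)
    fix S assume "S \<in> Ss"
    have "(1+a)^card(S\<inter>D') = (\<Sum>T\<in>Pow (S\<inter>D'). a ^ card T)"
      using fD by (intro pow_as_sum_Pow) auto
    also have "Pow (S\<inter>D') = {T. T \<in> Pow D' \<and> T \<subseteq> S}" by auto
    finally show "(1+a)^card(S\<inter>D') = (\<Sum>T\<in>{T. T \<in> Pow D' \<and> T \<subseteq> S}. a ^ card T)" .
  qed
  also have "\<dots> = (\<Sum>T\<in>Pow D'. \<Sum>S\<in>{S. S \<in> Ss \<and> T \<subseteq> S}. a ^ card T)"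
    using fSs fD by (intro sum.swap_restrict) auto
  also have "\<dots> = (\<Sum>T\<in>Pow D'. a ^ card T * real (card {S. S \<in> Ss \<and> T \<subseteq> S}))"
    by (simp add: mult.commute)
  also have "\<dots> \<le> (\<Sum>T\<in>Pow D'. a ^ card T * g (card T))"
  proof (rule sum_mono)
    fix T assume T: "T \<in> Pow D'"
    have "card {S. S \<in> Ss \<and> T \<subseteq> S} \<le> (if card T \<le> m then (card U - card T) choose (m - card T) else 0)"
      using count_supersets[OF U, of T m] T D unfolding Ss_def by auto
    then have "real (card {S. S \<in> Ss \<and> T \<subseteq> S}) \<le> g (card T)"
      unfolding g_def N_def by (auto split: if_splits)
    then show "a ^ card T * real (card {S. S \<in> Ss \<and> T \<subseteq> S}) \<le> a ^ card T * g (card T)"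
      using a by (intro mult_left_mono) auto
  qed
  also have "\<dots> = (\<Sum>s\<le>d. real (d choose s) * (a ^ s * g s))"
    unfolding d_def using sum_Pow_card[OF fD, of "\<lambda>s. a ^ s * g s"] by simp
  also have "\<dots> = (\<Sum>s\<le>d+m. real (d choose s) * (a ^ s * g s))"
    by (intro sum.mono_neutral_left) auto
  also have "\<dots> \<le> (\<Sum>s\<le>d+m. real (N choose m) * (real (m choose s) * (a*p) ^ s))"
  proof (intro sum_mono)
    fix s
    show "real (d choose s) * (a ^ s * g s) \<le> real (N choose m) * (real (m choose s) * (a*p) ^ s)"
    proof (cases "s \<le> m")
      case False then show ?thesis using a by (simp add: g_def p_def)
    next
      case True
      have dN: "d \<le> N" unfolding d_def N_def using D U by (simp add: card_mono)
      have "real (d choose s) * (a ^ s * g s) = a^s * (real (d choose s) * real ((N - s) choose (m - s)))"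
        using True by (simp add: g_def)
      also have "\<dots> \<le> a^s * (real (N choose s) * p^s * real ((N - s) choose (m - s)))"
      proof -
        have "real (d choose s) \<le> real (N choose s) * p^s"
          using choose_ratio[OF dN, of s] N unfolding p_def N_def by simp
        then show ?thesis using a by (simp add: mult_left_mono mult_right_mono)
      qed
      also have "\<dots> = a^s * p^s * (real (N choose s) * real ((N - s) choose (m - s)))"
        by (simp add: algebra_simps)
      also have "real (N choose s) * real ((N - s) choose (m - s)) = real (N choose m) * real (m choose s)"
        using choose_mult[OF True, of N] m unfolding N_def by (metis of_nat_mult)
      also have "a^s * p^s * (real (N choose m) * real (m choose s)) = real (N choose m) * (real (m choose s) * (a*p) ^ s)"
        by (simp add: power_mult_distrib algebra_simps)
      finally show ?thesis .
    qed
  qed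
  also have "\<dots> = real (N choose m) * (\<Sum>s\<le>m. real (m choose s) * (a*p) ^ s)"
    by (subst sum_distrib_left[symmetric], intro arg_cong[where f="\<lambda>x. _ * x"] sum.mono_neutral_right) auto
  also have "(\<Sum>s\<le>m. real (m choose s) * (a*p) ^ s) = (1 + a * p)^m"
    using binomial_ring[of "a*p" 1 m] by (simp add: add.commute mult.commute)
  finally show ?thesis unfolding Ss_def N_def p_def d_def .
qed


lemma hoeff_exp:
  fixes h p :: real
  assumes "h \<ge> 0" "p \<ge> 0"
  shows "1 + p * (exp h - 1) \<le> exp (h * p + h^2/8)"
proof -
  have pos: "1 + p * (exp h - 1) > 0" using assms by (intro add_pos_nonneg mult_nonneg_nonneg) auto
  have "ln (1 + p * (exp h - 1)) \<le> h * p + h^2/8"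
    using Hoeffdings_lemma_aux[OF assms] by simp
  then have "exp (ln (1 + p * (exp h - 1))) \<le> exp (h * p + h^2/8)" by simp
  with pos show ?thesis by simp
qed

lemma hyper_tail:
  fixes \<epsilon> t :: real
  assumes U: "finite U" and D: "D' \<subseteq> U" and N: "0 < card U" and m: "m \<le> card U" and e: "\<epsilon> \<ge> 0"
    and t: "t \<le> (1 - real (card D') / real (card U) - \<epsilon>) * real m"
  shows "real (card {S. S \<subseteq> U \<and> card S = m \<and> real (card (S - D')) \<le> t})
           \<le> exp (-2*\<epsilon>^2*real m) * real (card U choose m)"
proof -
  define p where "p = real (card D') / real (card U)"
  define h where "h = 4 * \<epsilon>"
  define a where "a = exp h - 1"
  define Ss where "Ss = {S. S\<subseteq>U \<and> card S = m}"
  define B where "B = {S. S \<subseteq> U \<and> card S = m \<and> real (card (S - D')) \<le> t}"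
  define C where "C = real (card U choose m)"
  have h0: "h \<ge> 0" using e by (simp add: h_def)
  have a0: "a \<ge> 0" using h0 by (simp add: a_def)
  have p0: "p \<ge> 0" by (simp add: p_def)
  have "Ss \<subseteq> Pow U" unfolding Ss_def by auto
  then have fSs: "finite Ss" using U by (meson finite_Pow_iff finite_subset)
  have BSs: "B \<subseteq> Ss" unfolding B_def Ss_def by auto
  have fB: "finite B" using fSs BSs finite_subset by blast
  have lowS: "exp (h * ((p + \<epsilon>) * real m)) \<le> (1 + a) ^ card (S \<inter> D')" if S: "S \<in> B" for S
  proof -
    have fS: "finite S" using S U unfolding B_def by (auto intro: finite_subset)
    have "card S = card (S \<inter> D') + card (S - D')"
      using fS by (metis Diff_Diff_Int card_Diff_subset_Int finite_Int add.commute card_Int_Diff[OF fS])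
    then have "real (card (S \<inter> D')) = real m - real (card (S - D'))" using S unfolding B_def by simp
    also have "\<dots> \<ge> (p + \<epsilon>) * real m" using S t unfolding B_def p_def by (simp add: algebra_simps)
    finally have "(p + \<epsilon>) * real m \<le> real (card (S \<inter> D'))" .
    then have "exp (h * ((p + \<epsilon>) * real m)) \<le> exp (real (card (S \<inter> D')) * h)"
      using h0 by (simp add: mult_left_mono mult.commute)
    also have "\<dots> = (1 + a) ^ card (S \<inter> D')" by (simp add: a_def exp_of_nat_mult)
    finally show ?thesis .
  qed
  have "real (card B) * exp (h * ((p + \<epsilon>) * real m)) = (\<Sum>S\<in>B. exp (h * ((p + \<epsilon>) * real m)))"
    by simp
  also have "\<dots> \<le> (\<Sum>S\<in>B. (1 + a) ^ card (S \<inter> D'))"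
    using lowS by (rule sum_mono)
  also have "\<dots> \<le> (\<Sum>S\<in>Ss. (1 + a) ^ card (S \<inter> D'))"
    using fSs BSs a0 by (intro sum_mono2) auto
  also have "\<dots> \<le> C * (1 + a * p) ^ m"
    unfolding Ss_def C_def p_def using gen_bound[OF U D N m a0] .
  also have "(1 + a * p) ^ m \<le> exp (h * p + h^2/8) ^ m"
    using hoeff_exp[OF h0 p0] a0 p0 by (intro power_mono) (auto simp: a_def mult.commute)
  also have "exp (h * p + h^2/8) ^ m = exp (real m * (h * p + h^2/8))"
    by (simp add: exp_of_nat_mult)
  finally have *: "real (card B) * exp (h * ((p + \<epsilon>) * real m)) \<le> C * exp (real m * (h * p + h^2/8))"
    using C_def by (simp add: mult_left_mono)
  have "real (card B) \<le> C * exp (real m * (h * p + h^2/8)) / exp (h * ((p + \<epsilon>) * real m))"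
    using * by (simp add: field_simps)
  also have "\<dots> = C * exp (real m * (h * p + h^2/8) - h * ((p + \<epsilon>) * real m))"
    by (simp add: exp_diff)
  also have "real m * (h * p + h^2/8) - h * ((p + \<epsilon>) * real m) = -2*\<epsilon>^2*real m"
    unfolding h_def by (simp add: power2_eq_square algebra_simps)
  finally show ?thesis unfolding B_def C_def by (simp add: mult.commute)
qed


lemma prob_bind_pmf_of_set:
  assumes "finite S" "S \<noteq> {}"
  shows "measure_pmf.prob (bind_pmf (pmf_of_set S) F) A = (\<Sum>x\<in>S. measure_pmf.prob (F x) A) / real (card S)"
proof -
  have "ennreal (measure_pmf.prob (bind_pmf (pmf_of_set S) F) A) = emeasure (bind_pmf (pmf_of_set S) F) A"
    by (simp add: measure_pmf.emeasure_eq_measure)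
  also have "\<dots> = (\<integral>\<^sup>+x. emeasure (F x) A \<partial>pmf_of_set S)" by simp
  also have "\<dots> = (\<Sum>x\<in>S. emeasure (F x) A) / card S"
    using assms by (simp add: nn_integral_pmf_of_set)
  also have "\<dots> = (\<Sum>x\<in>S. ennreal (measure_pmf.prob (F x) A)) / ennreal (real (card S))"
    by (simp add: measure_pmf.emeasure_eq_measure ennreal_of_nat_eq_real_of_nat)
  also have "\<dots> = ennreal ((\<Sum>x\<in>S. measure_pmf.prob (F x) A) / real (card S))"
  proof -
    have "(\<Sum>x\<in>S. ennreal (measure_pmf.prob (F x) A)) = ennreal (\<Sum>x\<in>S. measure_pmf.prob (F x) A)"
      by (rule sum_ennreal) simp
    then show ?thesis using assms by (simp add: divide_ennreal sum_nonneg card_gt_0_iff)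
  qed
  finally show ?thesis by (simp add: divide_nonneg_nonneg sum_nonneg)
qed


theorem mainTheorem1:
  fixes n k l :: nat and \<delta> \<gamma> \<beta> \<eta> :: real and D :: "nat set"
  assumes "n \<ge> 2"
    and "0 < \<delta>" "\<delta> < 1"
    and "D \<subseteq> {1..n}" "real (card D) = \<delta> * real n"
    and "k \<le> n" "l \<le> n - 1"
    and "0 < \<gamma>" "\<gamma> < 1" "0 < \<beta>" "\<beta> < 1"
    and "1 - \<delta> - \<gamma> > 0"
    and "1 - \<delta> * real n / (real n - 1) - \<beta> > 0"
    and "\<eta> > 0"
    and "real k > (\<eta> + 1) / (2 * log 2 (exp 1) * (1 - \<delta> - \<gamma>)^2)"
    and "real l > (log 2 (real k) + \<eta> + 1) /
                  (2 * log 2 (exp 1) * (1 - \<delta> * real n / (real n - 1) - \<beta>)^2)"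
  shows "measure_pmf.prob (committee_exp n k l)
           {(K, L). card (K - D) = k \<or>
                    (real (card (K - D)) > \<gamma> * real k \<and>
                     (\<forall>j \<in> K \<inter> D. real (card (L j - D)) \<ge> \<beta> * real l))}
         \<ge> 1 - 2 powr (-\<eta>)"
proof -
  note n2 = assms(1) and D = assms(4) and cD = assms(5) and kn = assms(6) and ln = assms(7)
  define e1 where "e1 = 1 - \<delta> - \<gamma>"
  define e2 where "e2 = 1 - \<delta> * real n / (real n - 1) - \<beta>"
  have e1: "e1 > 0" using assms(12) by (simp add: e1_def)
  have e2: "e2 > 0" using assms(13) by (simp add: e2_def)
  define r where "r = exp (- ((\<eta> + 1) * ln 2))"
  define b where "b = exp (-2 * e2^2 * real l)"
  have ln2: "ln (2::real) > 0" by simp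
  have l2e: "log 2 (exp 1) = 1 / ln 2" by (simp add: log_def)
  have E1: "exp (-2 * e1^2 * real k) \<le> r"
  proof -
    have "(\<eta> + 1) / (2 * e1^2 / ln 2) < real k"
      using assms(15) by (simp add: l2e e1_def)
    then have "(\<eta> + 1) * ln 2 < 2 * e1^2 * real k"
      using ln2 e1 e2 by (simp add: field_simps)
    then show ?thesis unfolding r_def by simp
  qed
  have E2: "real k * b \<le> r"
  proof (cases "k = 0")
    case True then show ?thesis by (simp add: r_def)
  next
    case False
    have "(ln (real k) / ln 2 + \<eta> + 1) / (2 * e2^2 / ln 2) < real l"
      using assms(16) by (simp add: l2e e2_def log_def)
    then have "(ln (real k) + (\<eta> + 1) * ln 2) * ln 2 < (2 * e2^2 * real l) * ln 2"
      using ln2 e1 e2 by (simp add: field_simps)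
    then have "ln (real k) + (\<eta> + 1) * ln 2 < 2 * e2^2 * real l"
      using ln2 mult_less_cancel_right_pos by blast
    then have "exp (ln (real k) - 2 * e2^2 * real l) \<le> r" unfolding r_def by simp
    moreover have "exp (ln (real k) - 2 * e2^2 * real l) = real k * b"
      using False by (simp add: b_def exp_diff exp_minus field_simps)
    ultimately show ?thesis by simp
  qed
  have r2: "2 * r = 2 powr (-\<eta>)"
  proof -
    have "2 * r = exp (ln 2) * exp (- ((\<eta> + 1) * ln 2))" by (simp add: r_def)
    also have "\<dots> = exp (ln 2 + - ((\<eta> + 1) * ln 2))" by (rule exp_add[symmetric])
    also have "ln 2 + - ((\<eta> + 1) * ln 2) = -\<eta> * ln (2::real)" by (simp add: algebra_simps)
    finally show ?thesis by (simp add: powr_def mult.commute)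
  qed
  define Ks where "Ks = {K. K \<subseteq> {1..n} \<and> card K = k}"
  define LSs where "LSs = (\<lambda>j::nat. {L. L \<subseteq> {1..n} - {j} \<and> card L = l})"
  define LS where "LS = (\<lambda>j. pmf_of_set (LSs j))"
  define F where "F = (\<lambda>K. map_pmf (\<lambda>L. (K, L)) (Pi_pmf K {} LS))"
  define M where "M = committee_exp n k l"
  have M: "M = bind_pmf (pmf_of_set Ks) F"
    unfolding M_def committee_exp_def Ks_def F_def LS_def LSs_def ..
  define A1 where "A1 = {(K::nat set, L::nat \<Rightarrow> nat set). real (card (K - D)) \<le> \<gamma> * real k}"
  define A2 where "A2 = {(K::nat set, L::nat \<Rightarrow> nat set). \<exists>j \<in> K \<inter> D. real (card (L j - D)) < \<beta> * real l}"
  define G where "G = {(K, L). card (K - D) = k \<or>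
                    (real (card (K - D)) > \<gamma> * real k \<and>
                     (\<forall>j \<in> K \<inter> D. real (card (L j - D)) \<ge> \<beta> * real l))}"
  have "Ks \<subseteq> Pow {1..n}" unfolding Ks_def by auto
  then have fKs: "finite Ks" by (meson finite_Pow_iff finite_atLeastAtMost finite_subset)
  have cKs: "card Ks = n choose k" unfolding Ks_def using n_subsets[of "{1..n}" k] by simp
  have Ks0: "Ks \<noteq> {}" using cKs kn by (metis card.empty zero_less_binomial_iff less_irrefl)
  have P1: "measure_pmf.prob M A1 \<le> exp (-2 * e1^2 * real k)"
  proof -
    have FK: "measure_pmf.prob (F K) A1 = (if real (card (K - D)) \<le> \<gamma> * real k then 1 else 0)" for K
    proof -
      have "measure_pmf.prob (F K) A1 = measure_pmf.prob (Pi_pmf K {} LS) ((\<lambda>L. (K, L)) -` A1)"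
        unfolding F_def by simp
      also have "(\<lambda>L. (K, L)) -` A1 = (if real (card (K - D)) \<le> \<gamma> * real k then UNIV else {})"
        unfolding A1_def by auto
      finally show ?thesis by simp
    qed
    have "measure_pmf.prob M A1 = (\<Sum>K\<in>Ks. measure_pmf.prob (F K) A1) / real (card Ks)"
      unfolding M by (rule prob_bind_pmf_of_set[OF fKs Ks0])
    also have "(\<Sum>K\<in>Ks. measure_pmf.prob (F K) A1) = real (card {K\<in>Ks. real (card (K - D)) \<le> \<gamma> * real k})"
      unfolding FK using fKs by (simp add: sum.If_cases Int_def)
    also have "{K\<in>Ks. real (card (K - D)) \<le> \<gamma> * real k} = {S. S \<subseteq> {1..n} \<and> card S = k \<and> real (card (S - D)) \<le> \<gamma> * real k}"
      unfolding Ks_def by auto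
    also have "real (card \<dots>) \<le> exp (-2 * e1^2 * real k) * real (card {1..n} choose k)"
    proof (rule hyper_tail)
      show "\<gamma> * real k \<le> (1 - real (card D) / real (card {1..n}) - e1) * real k"
        using cD n2 by (simp add: e1_def)
    qed (use D kn n2 e1 in auto)
    finally have "measure_pmf.prob M A1 \<le> exp (-2 * e1^2 * real k) * real (card {1..n} choose k) / real (card Ks)"
      by (simp add: divide_right_mono)
    also have "\<dots> = exp (-2 * e1^2 * real k)" using cKs kn by simp
    finally show ?thesis .
  qed
  have Q: "measure_pmf.prob (LS j) {X. real (card (X - D)) < \<beta> * real l} \<le> b" if j: "j \<in> D" for j
  proof -
    define U where "U = {1..n} - {j}"
    have jn: "j \<in> {1..n}" using j D by auto
    have cU: "card U = n - 1" unfolding U_def using jn by simp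
    have fU: "finite U" unfolding U_def by simp
    have "LSs j \<subseteq> Pow U" unfolding LSs_def U_def by auto
    then have fL: "finite (LSs j)" using fU by (meson finite_Pow_iff finite_subset)
    have cL: "card (LSs j) = (n - 1) choose l"
      unfolding LSs_def using n_subsets[OF fU, of l] cU by (simp add: U_def)
    have L0: "LSs j \<noteq> {}" using cL ln by (metis card.empty zero_less_binomial_iff less_irrefl)
    have fD: "finite D" using D finite_subset by blast
    have cD1: "card D \<ge> 1" using fD j by (metis One_nat_def Suc_leI card_gt_0_iff empty_iff)
    have "card (D - {j}) = card D - 1" using fD j by simp
    then have cD': "real (card (D - {j})) = \<delta> * real n - 1" using cD1 cD by (simp add: of_nat_diff)
    have "LSs j \<inter> {X. real (card (X - D)) < \<beta> * real l}
          \<subseteq> {S. S \<subseteq> U \<and> card S = l \<and> real (card (S - (D - {j}))) \<le> \<beta> * real l}"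
    proof
      fix X assume X: "X \<in> LSs j \<inter> {X. real (card (X - D)) < \<beta> * real l}"
      then have "X - (D - {j}) = X - D" unfolding LSs_def by auto
      with X show "X \<in> {S. S \<subseteq> U \<and> card S = l \<and> real (card (S - (D - {j}))) \<le> \<beta> * real l}"
        unfolding LSs_def U_def by auto
    qed
    note sub = this
    have "card (LSs j \<inter> {X. real (card (X - D)) < \<beta> * real l})
          \<le> card {S. S \<subseteq> U \<and> card S = l \<and> real (card (S - (D - {j}))) \<le> \<beta> * real l}"
    proof (rule card_mono)
      have "{S. S \<subseteq> U \<and> card S = l \<and> real (card (S - (D - {j}))) \<le> \<beta> * real l} \<subseteq> Pow U" by auto
      then show "finite {S. S \<subseteq> U \<and> card S = l \<and> real (card (S - (D - {j}))) \<le> \<beta> * real l}"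
        using fU by (meson finite_Pow_iff finite_subset)
    qed (rule sub)
    then have "real (card (LSs j \<inter> {X. real (card (X - D)) < \<beta> * real l}))
          \<le> real (card {S. S \<subseteq> U \<and> card S = l \<and> real (card (S - (D - {j}))) \<le> \<beta> * real l})"
      by simp
    also have "\<dots> \<le> exp (-2 * e2^2 * real l) * real (card U choose l)"
    proof (rule hyper_tail)
      have n1: "real n - 1 > 0" using n2 by simp
      have cUr: "real (card U) = real n - 1" using cU n2 by simp
      have "1 - real (card (D - {j})) / real (card U) - e2 = \<beta> + 1 / (real n - 1)"
      proof -
        have "(\<delta> * real n - 1)/(real n - 1) = \<delta> * real n/(real n - 1) - 1/(real n - 1)"
          by (simp add: diff_divide_distrib)
        then show ?thesis unfolding e2_def cD' cUr by simp
      qed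
      moreover have "\<beta> * real l \<le> (\<beta> + 1 / (real n - 1)) * real l"
        using n1 by (simp add: distrib_right)
      ultimately show "\<beta> * real l \<le> (1 - real (card (D - {j})) / real (card U) - e2) * real l" by simp
    next
      show "finite U" by fact
      show "D - {j} \<subseteq> U" using D unfolding U_def by auto
      show "0 < card U" using cU n2 by simp
      show "l \<le> card U" using cU ln by simp
      show "0 \<le> e2" using e2 by simp
    qed
    finally have *: "real (card (LSs j \<inter> {X. real (card (X - D)) < \<beta> * real l})) \<le> b * real (card (LSs j))"
      using cU cL by (simp add: b_def)
    have "measure_pmf.prob (LS j) {X. real (card (X - D)) < \<beta> * real l}
           = real (card (LSs j \<inter> {X. real (card (X - D)) < \<beta> * real l})) / real (card (LSs j))"
      unfolding LS_def using fL L0 by (simp add: measure_pmf_of_set)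
    also have "\<dots> \<le> b" using * fL L0 by (simp add: divide_le_eq card_gt_0_iff)
    finally show ?thesis .
  qed
  have P2K: "measure_pmf.prob (F K) A2 \<le> real k * b" if K: "K \<in> Ks" for K
  proof -
    have fK: "finite K" using K unfolding Ks_def by (auto intro: finite_subset)
    have cK: "card K = k" using K unfolding Ks_def by simp
    define P where "P = Pi_pmf K {} LS"
    have "measure_pmf.prob (F K) A2 = measure_pmf.prob P ((\<lambda>L. (K, L)) -` A2)"
      unfolding F_def P_def by simp
    also have "(\<lambda>L. (K, L)) -` A2 = (\<Union>j\<in>K \<inter> D. {L. real (card (L j - D)) < \<beta> * real l})"
      unfolding A2_def by auto
    also have "measure_pmf.prob P \<dots> \<le> (\<Sum>j\<in>K \<inter> D. measure_pmf.prob P {L. real (card (L j - D)) < \<beta> * real l})"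
      using fK by (intro measure_pmf.finite_measure_subadditive_finite) auto
    also have "\<dots> \<le> (\<Sum>j\<in>K \<inter> D. b)"
    proof (rule sum_mono)
      fix j assume j: "j \<in> K \<inter> D"
      have "measure_pmf.prob P {L. real (card (L j - D)) < \<beta> * real l}
            = measure_pmf.prob (map_pmf (\<lambda>f. f j) P) {X. real (card (X - D)) < \<beta> * real l}"
        by simp
      also have "map_pmf (\<lambda>f. f j) P = LS j"
        unfolding P_def using Pi_pmf_component[OF fK, of j "{}" LS] j by simp
      finally show "measure_pmf.prob P {L. real (card (L j - D)) < \<beta> * real l} \<le> b"
        using Q[of j] j by simp
    qed
    also have "\<dots> = real (card (K \<inter> D)) * b" by simp
    also have "\<dots> \<le> real k * b"
    proof -
      have "card (K \<inter> D) \<le> k" using fK cK by (metis card_mono inf_le1)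
      moreover have "b \<ge> 0" by (simp add: b_def)
      ultimately show ?thesis by (simp add: mult_right_mono)
    qed
    finally show ?thesis .
  qed
  have P2: "measure_pmf.prob M A2 \<le> real k * b"
  proof -
    have "measure_pmf.prob M A2 = (\<Sum>K\<in>Ks. measure_pmf.prob (F K) A2) / real (card Ks)"
      unfolding M by (rule prob_bind_pmf_of_set[OF fKs Ks0])
    also have "\<dots> \<le> (\<Sum>K\<in>Ks. real k * b) / real (card Ks)"
      by (intro divide_right_mono sum_mono P2K) auto
    also have "\<dots> = real k * b" using fKs Ks0 by simp
    finally show ?thesis .
  qed
  have "UNIV = G \<union> (A1 \<union> A2)" unfolding G_def A1_def A2_def by (auto simp: not_less)
  then have "1 = measure_pmf.prob M (G \<union> (A1 \<union> A2))" by simp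
  also have "\<dots> \<le> measure_pmf.prob M G + measure_pmf.prob M (A1 \<union> A2)"
    by (rule measure_Un_le) auto
  also have "measure_pmf.prob M (A1 \<union> A2) \<le> measure_pmf.prob M A1 + measure_pmf.prob M A2"
    by (rule measure_Un_le) auto
  finally have "1 \<le> measure_pmf.prob M G + r + r" using P1 P2 E1 E2 by linarith
  then show ?thesis using r2 unfolding M_def G_def by linarith
qed

end
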